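(* Let $(X, A, \rightarrow)$ be a labelled transition system with finite state set $X$ and a distinguished silent action $\tau \in A$. In the branching bisimulation game on this LTS, the winning region $\mathcal{W}_S$ of Spoiler is the least set $W$ such that $\lozenge_{S,1} \Box_D \lozenge_{S,2} W \subseteq W$.
   Context: Write $x \Longrightarrow x'$ if there is a (possibly empty) sequence of $\tau$-transitions from $x$ to $x'$, and $x \xrightarrow{(\alpha)} x'$ if either $x \xrightarrow{\alpha} x'$, or $\alpha = \tau$ and $x = x'$. Branching bisimulation game: Spoiler configurations are $C_S = X^2 \cup X^5$, written $[x,y]$ and $[x,x',y,y',y'']$; Duplicator configurations are $C_D = X \times A \times X \times X$, written $\langle x,\alpha,x',y\rangle$. Spoiler moves: $\rightarrow_{S,1} \subseteq X^2 \times C_D$ consists of moves from $[x,y]$ to $\langle x,\alpha,x',y\rangle$ if $x \xrightarrow{\alpha} x'$, and from $[x,y]$ to $\langle y,\alpha,y',x\rangle$ if $y \xrightarrow{\alpha} y'$; $\rightarrow_{S,2} \subseteq X^5 \times X^2$ consists of moves from $[x,x',y,y',y'']$ to $[x,y']$ or to $[x',y'']$. Duplicator moves $\rightarrow_D$: from $\langle x,\alpha,x',y\rangle$ to $[x,x',y,y',y'']$ if $y \Longrightarrow y' \xrightarrow{(\alpha)} y''$. A play from $[x,y]$ is a finite or infinite sequence of configurations starting at $[x,y]$, each next one a move from the previous; it is maximal if infinite or no move is possible from its last configuration. Spoiler wins a finite maximal play iff its last configuration is a Duplicator configuration; all other maximal plays are won by Duplicator. A (positional) Spoiler strategy maps each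 Spoiler configuration to a Spoiler move from it; a play is consistent with it if all Spoiler moves in the play follow the strategy; it is winning from $[x,y]$ if all maximal plays from $[x,y]$ consistent with it are won by Spoiler. $\mathcal{W}_S$ is the set of configurations $[x,y] \in X^2$ from which Spoiler has a winning strategy. Modalities: for a move relation $\rightarrow_R$ and a set $W$ of configurations, $\lozenge_R W = \{c \mid \exists c'.\ c \rightarrow_R c' \wedge c' \in W\}$ and $\Box_R W = \{c \mid \forall c'.\ c \rightarrow_R c' \Rightarrow c' \in W\}$, where $c$ ranges over the source configurations of $\rightarrow_R$ (i.e. $X^2$ for $\rightarrow_{S,1}$, $C_D$ for $\rightarrow_D$, $X^5$ for $\rightarrow_{S,2}$). *)

theory Defs
  imports Main
begin

datatype ('x, 'a) conf =
    SP 'x 'x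
  | SF 'x 'x 'x 'x 'x
  | DC 'x 'a 'x 'x

definition tau_steps :: "('x \<Rightarrow> 'a \<Rightarrow> 'x \<Rightarrow> bool) \<Rightarrow> 'a \<Rightarrow> 'x \<Rightarrow> 'x \<Rightarrow> bool" where
  "tau_steps T tau = (\<lambda>u v. T u tau v)\<^sup>*\<^sup>*"

definition opt_step :: "('x \<Rightarrow> 'a \<Rightarrow> 'x \<Rightarrow> bool) \<Rightarrow> 'a \<Rightarrow> 'x \<Rightarrow> 'a \<Rightarrow> 'x \<Rightarrow> bool" where
  "opt_step T tau x \<alpha> x' \<longleftrightarrow> T x \<alpha> x' \<or> (\<alpha> = tau \<and> x = x')"

definition mvS1 :: "('x \<Rightarrow> 'a \<Rightarrow> 'x \<Rightarrow> bool) \<Rightarrow> ('x, 'a) conf \<Rightarrow> ('x, 'a) conf \<Rightarrow> bool" where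
  "mvS1 T c c' \<longleftrightarrow> (\<exists>x y \<alpha> z. c = SP x y \<and>
      ((c' = DC x \<alpha> z y \<and> T x \<alpha> z) \<or> (c' = DC y \<alpha> z x \<and> T y \<alpha> z)))"

definition mvS2 :: "('x, 'a) conf \<Rightarrow> ('x, 'a) conf \<Rightarrow> bool" where
  "mvS2 c c' \<longleftrightarrow> (\<exists>x x' y y' y''. c = SF x x' y y' y'' \<and> (c' = SP x y' \<or> c' = SP x' y''))"

definition mvD :: "('x \<Rightarrow> 'a \<Rightarrow> 'x \<Rightarrow> bool) \<Rightarrow> 'a \<Rightarrow> ('x, 'a) conf \<Rightarrow> ('x, 'a) conf \<Rightarrow> bool" where
  "mvD T tau c c' \<longleftrightarrow> (\<exists>x \<alpha> x' y y' y''. c = DC x \<alpha> x' y \<and> c' = SF x x' y y' y'' \<and>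
      tau_steps T tau y y' \<and> opt_step T tau y' \<alpha> y'')"

definition mvS :: "('x \<Rightarrow> 'a \<Rightarrow> 'x \<Rightarrow> bool) \<Rightarrow> ('x, 'a) conf \<Rightarrow> ('x, 'a) conf \<Rightarrow> bool" where
  "mvS T c c' \<longleftrightarrow> mvS1 T c c' \<or> mvS2 c c'"

definition move :: "('x \<Rightarrow> 'a \<Rightarrow> 'x \<Rightarrow> bool) \<Rightarrow> 'a \<Rightarrow> ('x, 'a) conf \<Rightarrow> ('x, 'a) conf \<Rightarrow> bool" where
  "move T tau c c' \<longleftrightarrow> mvS T c c' \<or> mvD T tau c c'"

fun is_spoiler :: "('x, 'a) conf \<Rightarrow> bool" where
  "is_spoiler (DC _ _ _ _) = False"
| "is_spoiler _ = True"

definition srcS1 :: "('x, 'a) conf set" where "srcS1 = {SP x y | x y. True}"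
definition srcS2 :: "('x, 'a) conf set" where "srcS2 = {SF x x' y y' y'' | x x' y y' y''. True}"
definition srcD :: "('x, 'a) conf set" where "srcD = {DC x \<alpha> x' y | x \<alpha> x' y. True}"

definition Dia :: "('c \<Rightarrow> 'c \<Rightarrow> bool) \<Rightarrow> 'c set \<Rightarrow> 'c set \<Rightarrow> 'c set" where
  "Dia R src W = {c \<in> src. \<exists>c'. R c c' \<and> c' \<in> W}"

definition Box :: "('c \<Rightarrow> 'c \<Rightarrow> bool) \<Rightarrow> 'c set \<Rightarrow> 'c set \<Rightarrow> 'c set" where
  "Box R src W = {c \<in> src. \<forall>c'. R c c' \<longrightarrow> c' \<in> W}"

definition spoiler_strategy :: "('x \<Rightarrow> 'a \<Rightarrow> 'x \<Rightarrow> bool) \<Rightarrow> (('x, 'a) conf \<Rightarrow> ('x, 'a) conf) \<Rightarrow> bool" where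
  "spoiler_strategy T \<sigma> \<longleftrightarrow> (\<forall>c. is_spoiler c \<and> (\<exists>c'. mvS T c c') \<longrightarrow> mvS T c (\<sigma> c))"

definition fin_play_cons ::
  "('x \<Rightarrow> 'a \<Rightarrow> 'x \<Rightarrow> bool) \<Rightarrow> 'a \<Rightarrow> (('x, 'a) conf \<Rightarrow> ('x, 'a) conf) \<Rightarrow> ('x, 'a) conf \<Rightarrow> ('x, 'a) conf list \<Rightarrow> bool" where
  "fin_play_cons T tau \<sigma> c cs \<longleftrightarrow> cs \<noteq> [] \<and> hd cs = c \<and>
     (\<forall>i. Suc i < length cs \<longrightarrow> move T tau (cs ! i) (cs ! Suc i)) \<and>
     (\<forall>i. Suc i < length cs \<longrightarrow> is_spoiler (cs ! i) \<longrightarrow> cs ! Suc i = \<sigma> (cs ! i))"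

definition maximal_fin :: "('x \<Rightarrow> 'a \<Rightarrow> 'x \<Rightarrow> bool) \<Rightarrow> 'a \<Rightarrow> ('x, 'a) conf list \<Rightarrow> bool" where
  "maximal_fin T tau cs \<longleftrightarrow> \<not> (\<exists>c'. move T tau (last cs) c')"

definition inf_play_cons ::
  "('x \<Rightarrow> 'a \<Rightarrow> 'x \<Rightarrow> bool) \<Rightarrow> 'a \<Rightarrow> (('x, 'a) conf \<Rightarrow> ('x, 'a) conf) \<Rightarrow> ('x, 'a) conf \<Rightarrow> (nat \<Rightarrow> ('x, 'a) conf) \<Rightarrow> bool" where
  "inf_play_cons T tau \<sigma> c f \<longleftrightarrow> f 0 = c \<and>
     (\<forall>i. move T tau (f i) (f (Suc i))) \<and>
     (\<forall>i. is_spoiler (f i) \<longrightarrow> f (Suc i) = \<sigma> (f i))"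

definition winning_strategy ::
  "('x \<Rightarrow> 'a \<Rightarrow> 'x \<Rightarrow> bool) \<Rightarrow> 'a \<Rightarrow> (('x, 'a) conf \<Rightarrow> ('x, 'a) conf) \<Rightarrow> ('x, 'a) conf \<Rightarrow> bool" where
  "winning_strategy T tau \<sigma> c \<longleftrightarrow> spoiler_strategy T \<sigma> \<and>
     (\<forall>cs. fin_play_cons T tau \<sigma> c cs \<and> maximal_fin T tau cs \<longrightarrow> \<not> is_spoiler (last cs)) \<and>
     (\<not> (\<exists>f. inf_play_cons T tau \<sigma> c f))"

definition W_S :: "('x \<Rightarrow> 'a \<Rightarrow> 'x \<Rightarrow> bool) \<Rightarrow> 'a \<Rightarrow> ('x, 'a) conf set" where
  "W_S T tau = {SP x y | x y. \<exists>\<sigma>. winning_strategy T tau \<sigma> (SP x y)}"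

definition game_op :: "('x \<Rightarrow> 'a \<Rightarrow> 'x \<Rightarrow> bool) \<Rightarrow> 'a \<Rightarrow> ('x, 'a) conf set \<Rightarrow> ('x, 'a) conf set" where
  "game_op T tau W = Dia (mvS1 T) srcS1 (Box (mvD T tau) srcD (Dia mvS2 srcS2 W))"

end

theory Submission
  imports Defs
begin

definition GG :: "('x \<Rightarrow> 'a \<Rightarrow> 'x \<Rightarrow> bool) \<Rightarrow> 'a \<Rightarrow> nat \<Rightarrow> ('x, 'a) conf set" where
  "GG T tau n = (game_op T tau ^^ n) {}"
definition DD :: "('x \<Rightarrow> 'a \<Rightarrow> 'x \<Rightarrow> bool) \<Rightarrow> 'a \<Rightarrow> nat \<Rightarrow> ('x, 'a) conf set" where
  "DD T tau n = Dia mvS2 srcS2 (GG T tau n)"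
definition BB :: "('x \<Rightarrow> 'a \<Rightarrow> 'x \<Rightarrow> bool) \<Rightarrow> 'a \<Rightarrow> nat \<Rightarrow> ('x, 'a) conf set" where
  "BB T tau n = Box (mvD T tau) srcD (DD T tau n)"

lemma mono_game_op: "mono (game_op T tau)"
  unfolding mono_def game_op_def Dia_def Box_def by blast

lemma GG_Suc: "GG T tau (Suc n) = Dia (mvS1 T) srcS1 (BB T tau n)"
  by (simp add: GG_def BB_def DD_def game_op_def)

lemma GG_0: "GG T tau 0 = {}" by (simp add: GG_def)

lemma GG_mono_Suc: "GG T tau n \<subseteq> GG T tau (Suc n)"
proof (induction n)
  case 0 then show ?case by (simp add: GG_0)
next
  case (Suc n)
  then show ?case unfolding GG_def using mono_game_op[of T tau]
    by (simp add: mono_def)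
qed

lemma GG_mono: "m \<le> n \<Longrightarrow> GG T tau m \<subseteq> GG T tau n"
  by (rule lift_Suc_mono_le[of "GG T tau"]) (rule GG_mono_Suc)

lemma GG_SP: "c \<in> GG T tau n \<Longrightarrow> \<exists>x y. c = SP x y"
  by (cases n) (auto simp: GG_0 GG_Suc Dia_def srcS1_def)

lemma DD_SF: "c \<in> DD T tau n \<Longrightarrow> \<exists>x x' y y' y''. c = SF x x' y y' y''"
  by (auto simp: DD_def Dia_def srcS2_def)

lemma BB_DC: "c \<in> BB T tau n \<Longrightarrow> \<exists>x a x' y. c = DC x a x' y"
  by (auto simp: BB_def Box_def srcD_def)

lemma DD_mono: "m \<le> n \<Longrightarrow> DD T tau m \<subseteq> DD T tau n"
  using GG_mono[of m n T tau] by (auto simp: DD_def Dia_def)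

lemma BB_mono: "m \<le> n \<Longrightarrow> BB T tau m \<subseteq> BB T tau n"
  using DD_mono[of m n T tau] by (auto simp: BB_def Box_def)

lemma GG_stab:
  fixes T :: "'x::finite \<Rightarrow> 'a \<Rightarrow> 'x \<Rightarrow> bool"
  shows "\<exists>N. GG T tau (Suc N) = GG T tau N"
proof (rule ccontr)
  assume H: "\<not> ?thesis"
  let ?S = "(\<lambda>(x,y). SP x y) ` (UNIV :: ('x \<times> 'x) set) :: ('x,'a) conf set"
  have fin: "finite ?S" by simp
  have sub: "GG T tau n \<subseteq> ?S" for n
    using GG_SP[of _ T tau n] by fastforce
  have "n \<le> card (GG T tau n)" for n
  proof (induction n)
    case 0 then show ?case by simp
  next
    case (Suc n)
    have "GG T tau n \<subset> GG T tau (Suc n)" using GG_mono_Suc[of T tau n] H by blast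
    then have "card (GG T tau n) < card (GG T tau (Suc n))"
      by (meson fin psubset_card_mono rev_finite_subset sub)
    then show ?case using Suc by simp
  qed
  moreover have "card (GG T tau n) \<le> card ?S" for n using card_mono[OF fin sub] .
  ultimately show False using le_trans[of "Suc (card ?S)"] by (metis Suc_n_not_le_n)
qed


lemma move_SP: "move T tau (SP x y) c' \<longleftrightarrow> mvS1 T (SP x y) c'"
  by (auto simp: move_def mvS_def mvS2_def mvD_def)
lemma move_SF: "move T tau (SF a b c d e) c' \<longleftrightarrow> mvS2 (SF a b c d e) c'"
  by (auto simp: move_def mvS_def mvS1_def mvD_def)
lemma move_DC: "move T tau (DC a b c d) c' \<longleftrightarrow> mvD T tau (DC a b c d) c'"
  by (auto simp: move_def mvS_def mvS1_def mvS2_def)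
lemma SF_has_move: "mvS2 (SF a b c d e) (SP a d)"
  by (auto simp: mvS2_def)

definition PP :: "('x \<Rightarrow> 'a \<Rightarrow> 'x \<Rightarrow> bool) \<Rightarrow> 'a \<Rightarrow> ('x, 'a) conf set \<Rightarrow> ('x, 'a) conf \<Rightarrow> bool" where
  "PP T tau W c \<longleftrightarrow> (\<exists>x y. c = SP x y \<and> c \<notin> W) \<or>
     (c \<in> srcD \<and> c \<notin> Box (mvD T tau) srcD (Dia mvS2 srcS2 W)) \<or>
     (c \<in> srcS2 \<and> c \<notin> Dia mvS2 srcS2 W)"

definition hh :: "('x \<Rightarrow> 'a \<Rightarrow> 'x \<Rightarrow> bool) \<Rightarrow> 'a \<Rightarrow> ('x, 'a) conf set \<Rightarrow> (('x, 'a) conf \<Rightarrow> ('x, 'a) conf) \<Rightarrow> ('x, 'a) conf \<Rightarrow> ('x, 'a) conf" where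
  "hh T tau W \<sigma> c = (if is_spoiler c then \<sigma> c else SOME s. mvD T tau c s \<and> s \<notin> Dia mvS2 srcS2 W)"

lemma PP_step:
  assumes st: "spoiler_strategy T \<sigma>" and pre: "game_op T tau W \<subseteq> W"
    and P: "PP T tau W c" and mv: "\<exists>c'. move T tau c c'"
  shows "move T tau c (hh T tau W \<sigma> c) \<and> PP T tau W (hh T tau W \<sigma> c)"
proof (cases c)
  case (SP x y)
  then have nW: "c \<notin> W" using P by (auto simp: PP_def srcD_def srcS2_def)
  have "mvS T c (\<sigma> c)" using st mv SP unfolding spoiler_strategy_def
    by (auto simp: move_def mvD_def)
  then have m: "mvS1 T c (\<sigma> c)" using SP by (simp add: mvS_def mvS2_def)
  have "c \<notin> game_op T tau W" using nW pre by blast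
  then have "\<sigma> c \<notin> Box (mvD T tau) srcD (Dia mvS2 srcS2 W)"
    using m SP by (auto simp: game_op_def Dia_def srcS1_def)
  moreover have "\<sigma> c \<in> srcD" using m SP by (auto simp: mvS1_def srcD_def)
  ultimately show ?thesis using m SP by (auto simp: hh_def PP_def move_SP)
next
  case (SF a b c2 d e)
  then have nW: "c \<notin> Dia mvS2 srcS2 W" using P by (auto simp: PP_def srcD_def)
  have "is_spoiler c \<and> (\<exists>c'. mvS T c c')" using SF SF_has_move[of a b c2 d e] unfolding mvS_def by auto
  then have "mvS T c (\<sigma> c)" using st unfolding spoiler_strategy_def by blast
  then have m: "mvS2 c (\<sigma> c)" using SF by (simp add: mvS_def mvS1_def)
  obtain x y where xy: "\<sigma> c = SP x y" using m by (auto simp: mvS2_def)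
  have "\<sigma> c \<notin> W" using nW m SF by (auto simp: Dia_def srcS2_def)
  then show ?thesis using m SF xy by (auto simp: hh_def PP_def move_SF)
next
  case (DC a b c2 d)
  then have nB: "c \<notin> Box (mvD T tau) srcD (Dia mvS2 srcS2 W)" using P
    by (auto simp: PP_def srcS2_def)
  then have ex: "\<exists>s. mvD T tau c s \<and> s \<notin> Dia mvS2 srcS2 W" using DC
    by (auto simp: Box_def srcD_def)
  have hc: "hh T tau W \<sigma> c = (SOME s. mvD T tau c s \<and> s \<notin> Dia mvS2 srcS2 W)"
    using DC by (simp add: hh_def)
  have h: "mvD T tau c (hh T tau W \<sigma> c) \<and> hh T tau W \<sigma> c \<notin> Dia mvS2 srcS2 W"
    unfolding hc by (rule someI_ex[OF ex])
  then have "hh T tau W \<sigma> c \<in> srcS2" by (auto simp: mvD_def srcS2_def)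
  then show ?thesis using h DC by (auto simp: PP_def move_DC)
qed

lemma PP_stuck: "PP T tau W c \<Longrightarrow> \<not> (\<exists>c'. move T tau c c') \<Longrightarrow> is_spoiler c"
proof (cases c)
  case (DC a b c2 d)
  assume P: "PP T tau W c" and nm: "\<not> (\<exists>c'. move T tau c c')"
  then have nB: "c \<notin> Box (mvD T tau) srcD (Dia mvS2 srcS2 W)" using DC
    by (auto simp: PP_def srcS2_def)
  then have "\<exists>s. mvD T tau c s" using DC by (auto simp: Box_def srcD_def)
  then show ?thesis using nm DC by (auto simp: move_DC)
qed auto

lemma WS_least:
  assumes pre: "game_op T tau W \<subseteq> W"
  shows "W_S T tau \<subseteq> W"
proof
  fix c assume "c \<in> W_S T tau"
  then obtain x y \<sigma> where c: "c = SP x y" and win: "winning_strategy T tau \<sigma> (SP x y)"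
    by (auto simp: W_S_def)
  show "c \<in> W"
  proof (rule ccontr)
    assume nW: "c \<notin> W"
    have st: "spoiler_strategy T \<sigma>" using win by (simp add: winning_strategy_def)
    define f where "f n = (hh T tau W \<sigma> ^^ n) c" for n
    have fS: "f (Suc n) = hh T tau W \<sigma> (f n)" for n by (simp add: f_def)
    have inv: "(\<forall>m<n. \<exists>c'. move T tau (f m) c') \<longrightarrow> PP T tau W (f n) \<and> (\<forall>m<n. move T tau (f m) (f (Suc m)))" for n
    proof (induction n)
      case 0 then show ?case using nW c by (simp add: f_def PP_def)
    next
      case (Suc n)
      show ?case
      proof
        assume a: "\<forall>m<Suc n. \<exists>c'. move T tau (f m) c'"
        then have "PP T tau W (f n)" "\<forall>m<n. move T tau (f m) (f (Suc m))" using Suc by auto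
        moreover have "move T tau (f n) (f (Suc n)) \<and> PP T tau W (f (Suc n))"
          using PP_step[OF st pre \<open>PP T tau W (f n)\<close>] a fS by auto
        ultimately show "PP T tau W (f (Suc n)) \<and> (\<forall>m<Suc n. move T tau (f m) (f (Suc m)))"
          using less_Suc_eq by auto
      qed
    qed
    have cons: "is_spoiler (f m) \<Longrightarrow> f (Suc m) = \<sigma> (f m)" for m by (simp add: fS hh_def)
    show False
    proof (cases "\<forall>n. \<exists>c'. move T tau (f n) c'")
      case True
      then have "inf_play_cons T tau \<sigma> (SP x y) f"
        using inv cons c by (auto simp: inf_play_cons_def f_def)
      then show False using win by (auto simp: winning_strategy_def)
    next
      case False
      define n where "n = (LEAST n. \<not> (\<exists>c'. move T tau (f n) c'))"
      have ex: "\<exists>n. \<not> (\<exists>c'. move T tau (f n) c')" using False by blast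
      have nm: "\<not> (\<exists>c'. move T tau (f n) c')" unfolding n_def by (rule LeastI_ex[OF ex])
      have bm: "\<forall>m<n. \<exists>c'. move T tau (f m) c'" unfolding n_def using not_less_Least by blast
      have P: "PP T tau W (f n)" and mvs: "\<forall>m<n. move T tau (f m) (f (Suc m))" using inv bm by auto
      define cs where "cs = map f [0..<Suc n]"
      have len: "length cs = Suc n" by (simp add: cs_def)
      have nth: "i < Suc n \<Longrightarrow> cs ! i = f i" for i by (simp add: cs_def del: upt_Suc)
      have ne: "cs \<noteq> []" using len by auto
      have hd: "hd cs = SP x y" using nth[of 0] c hd_conv_nth[OF ne] by (simp add: f_def)
      have "fin_play_cons T tau \<sigma> (SP x y) cs"
        unfolding fin_play_cons_def using ne hd len nth mvs cons fS
        by auto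
      moreover have lst: "last cs = f n" using len nth[of n] ne by (simp add: last_conv_nth)
      moreover have "maximal_fin T tau cs" using nm lst by (simp add: maximal_fin_def)
      ultimately show False using win PP_stuck[OF P nm] by (auto simp: winning_strategy_def)
    qed
  qed
qed


definition rk where "rk T tau c = (LEAST n. c \<in> GG T tau n)"
definition rkD where "rkD T tau c = (LEAST n. c \<in> DD T tau n)"
definition rkB where "rkB T tau c = (LEAST n. c \<in> BB T tau n)"

definition sig :: "('x \<Rightarrow> 'a \<Rightarrow> 'x \<Rightarrow> bool) \<Rightarrow> 'a \<Rightarrow> ('x, 'a) conf \<Rightarrow> ('x, 'a) conf" where
  "sig T tau c = (case c of
     SP x y \<Rightarrow> (if \<exists>n. c \<in> GG T tau n then SOME d. mvS1 T c d \<and> d \<in> BB T tau (rk T tau c - 1)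
                else SOME d. mvS T c d)
   | SF a b c2 d e \<Rightarrow> (if \<exists>n. c \<in> DD T tau n then SOME d. mvS2 c d \<and> d \<in> GG T tau (rkD T tau c)
                else SOME d. mvS T c d)
   | DC a b c2 d \<Rightarrow> c)"

definition mu where
  "mu T tau c = (case c of SP x y \<Rightarrow> 3 * rk T tau c
     | SF a b c2 d e \<Rightarrow> 3 * rkD T tau c + 1 | DC a b c2 d \<Rightarrow> 3 * rkB T tau c + 2)"

definition good where "good T tau c \<longleftrightarrow> (\<exists>n. c \<in> GG T tau n \<or> c \<in> BB T tau n \<or> c \<in> DD T tau n)"

lemma rk_props:
  assumes "c \<in> GG T tau n"
  shows "c \<in> GG T tau (rk T tau c)" "rk T tau c \<noteq> 0" "rk T tau c \<le> n"
    "\<exists>d. mvS1 T c d \<and> d \<in> BB T tau (rk T tau c - 1)"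
proof -
  show a: "c \<in> GG T tau (rk T tau c)" unfolding rk_def using assms by (rule LeastI)
  show b: "rk T tau c \<noteq> 0" using a GG_0[of T tau] by (metis empty_iff)
  show "rk T tau c \<le> n" unfolding rk_def using assms by (rule Least_le)
  have "c \<in> GG T tau (Suc (rk T tau c - 1))" using a b by simp
  then show "\<exists>d. mvS1 T c d \<and> d \<in> BB T tau (rk T tau c - 1)"
    unfolding GG_Suc Dia_def by blast
qed

lemma rkD_props:
  assumes "c \<in> DD T tau n"
  shows "c \<in> DD T tau (rkD T tau c)" "rkD T tau c \<le> n"
    "\<exists>d. mvS2 c d \<and> d \<in> GG T tau (rkD T tau c)"
proof -
  show a: "c \<in> DD T tau (rkD T tau c)" unfolding rkD_def using assms by (rule LeastI)
  show "rkD T tau c \<le> n" unfolding rkD_def using assms by (rule Least_le)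
  show "\<exists>d. mvS2 c d \<and> d \<in> GG T tau (rkD T tau c)" using a unfolding DD_def Dia_def by blast
qed

lemma rkB_props:
  assumes "c \<in> BB T tau n"
  shows "c \<in> BB T tau (rkB T tau c)" "rkB T tau c \<le> n"
proof -
  show a: "c \<in> BB T tau (rkB T tau c)" unfolding rkB_def using assms by (rule LeastI)
  show "rkB T tau c \<le> n" unfolding rkB_def using assms by (rule Least_le)
qed

lemma sig_SP:
  assumes "c \<in> GG T tau n"
  shows "mvS1 T c (sig T tau c) \<and> sig T tau c \<in> BB T tau (rk T tau c - 1)"
proof -
  obtain x y where c: "c = SP x y" using GG_SP[OF assms] by blast
  have "sig T tau c = (SOME d. mvS1 T c d \<and> d \<in> BB T tau (rk T tau c - 1))"
    using assms c by (auto simp: sig_def)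
  then show ?thesis using someI_ex[OF rk_props(4)[OF assms]] by simp
qed

lemma sig_SF:
  assumes "c \<in> DD T tau n"
  shows "mvS2 c (sig T tau c) \<and> sig T tau c \<in> GG T tau (rkD T tau c)"
proof -
  obtain a b c2 d e where c: "c = SF a b c2 d e" using DD_SF[OF assms] by blast
  have "sig T tau c = (SOME d. mvS2 c d \<and> d \<in> GG T tau (rkD T tau c))"
    using assms c by (auto simp: sig_def)
  then show ?thesis using someI_ex[OF rkD_props(3)[OF assms]] by simp
qed

lemma sig_strat: "spoiler_strategy T (sig T tau)"
  unfolding spoiler_strategy_def
proof (intro allI impI)
  fix c assume a: "is_spoiler c \<and> (\<exists>c'. mvS T c c')"
  show "mvS T c (sig T tau c)"
  proof (cases c)
    case (SP x y)
    show ?thesis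
    proof (cases "\<exists>n. c \<in> GG T tau n")
      case True then obtain n where "c \<in> GG T tau n" by blast
      then show ?thesis using sig_SP[of c T tau n] by (simp add: mvS_def)
    next
      case False
      then have "sig T tau c = (SOME d. mvS T c d)" using SP by (simp add: sig_def)
      then show ?thesis using a someI_ex[of "mvS T c"] by simp
    qed
  next
    case (SF a b c2 d e)
    show ?thesis
    proof (cases "\<exists>n. c \<in> DD T tau n")
      case True then obtain n where "c \<in> DD T tau n" by blast
      then show ?thesis using sig_SF[of c T tau n] by (simp add: mvS_def)
    next
      case False
      then have "sig T tau c = (SOME d. mvS T c d)" using SF by (simp add: sig_def)
      then show ?thesis using a someI_ex[of "mvS T c"] by simp
    qed
  next
    case (DC a b c2 d) then show ?thesis using a by simp
  qed
qed

lemma good_step: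
  assumes g: "good T tau c" and mv: "move T tau c c'" and cons: "is_spoiler c \<longrightarrow> c' = sig T tau c"
  shows "good T tau c' \<and> mu T tau c' < mu T tau c"
proof -
  obtain n where n: "c \<in> GG T tau n \<or> c \<in> BB T tau n \<or> c \<in> DD T tau n" using g by (auto simp: good_def)
  show ?thesis
  proof (cases c)
    case (SP x y)
    then have cG: "c \<in> GG T tau n" using n BB_DC[of c T tau n] DD_SF[of c T tau n] by auto
    have c': "c' = sig T tau c" using cons SP by simp
    have m: "c' \<in> BB T tau (rk T tau c - 1)" using sig_SP[OF cG] c' by simp
    obtain a b c2 d where dc: "c' = DC a b c2 d" using BB_DC[OF m] by blast
    have "rkB T tau c' \<le> rk T tau c - 1" using rkB_props(2)[OF m] .
    moreover have "rk T tau c \<noteq> 0" using rk_props(2)[OF cG] .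
    ultimately have "mu T tau c' < mu T tau c" using SP dc by (simp add: mu_def)
    moreover have "good T tau c'" using m by (auto simp: good_def)
    ultimately show ?thesis by simp
  next
    case (DC a b c2 d)
    then have cB: "c \<in> BB T tau n" using n GG_SP[of c T tau n] DD_SF[of c T tau n] by auto
    have mB: "c \<in> BB T tau (rkB T tau c)" using rkB_props(1)[OF cB] .
    have "mvD T tau c c'" using mv DC by (simp add: move_DC)
    then have m: "c' \<in> DD T tau (rkB T tau c)" using mB by (auto simp: BB_def Box_def)
    obtain a' b' c2' d' e' where sf: "c' = SF a' b' c2' d' e'" using DD_SF[OF m] by blast
    have "rkD T tau c' \<le> rkB T tau c" using rkD_props(2)[OF m] .
    then have "mu T tau c' < mu T tau c" using DC sf by (simp add: mu_def)
    moreover have "good T tau c'" using m by (auto simp: good_def)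
    ultimately show ?thesis by simp
  next
    case (SF a b c2 d e)
    then have cD: "c \<in> DD T tau n" using n GG_SP[of c T tau n] BB_DC[of c T tau n] by auto
    have c': "c' = sig T tau c" using cons SF by simp
    have m: "c' \<in> GG T tau (rkD T tau c)" using sig_SF[OF cD] c' by simp
    obtain x y where sp: "c' = SP x y" using GG_SP[OF m] by blast
    have "rk T tau c' \<le> rkD T tau c" using rk_props(3)[OF m] .
    then have "mu T tau c' < mu T tau c" using SF sp by (simp add: mu_def)
    moreover have "good T tau c'" using m by (auto simp: good_def)
    ultimately show ?thesis by simp
  qed
qed

lemma good_stuck:
  assumes g: "good T tau c" and nm: "\<not> (\<exists>c'. move T tau c c')"
  shows "\<not> is_spoiler c"
proof (cases c)
  case (SP x y)
  obtain n where n: "c \<in> GG T tau n \<or> c \<in> BB T tau n \<or> c \<in> DD T tau n" using g by (auto simp: good_def)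
  then have cG: "c \<in> GG T tau n" using SP BB_DC[of c T tau n] DD_SF[of c T tau n] by auto
  then show ?thesis using rk_props(4)[OF cG] nm SP by (auto simp: move_SP)
next
  case (SF a b c2 d e)
  then show ?thesis using nm SF_has_move[of a b c2 d e] by (auto simp: move_SF)
qed simp

lemma GG_win:
  assumes cG: "c \<in> GG T tau n"
  shows "winning_strategy T tau (sig T tau) c"
  unfolding winning_strategy_def
proof (intro conjI allI impI)
  show "spoiler_strategy T (sig T tau)" by (rule sig_strat)
next
  have g0: "good T tau c" using cG by (auto simp: good_def)
  fix cs assume a: "fin_play_cons T tau (sig T tau) c cs \<and> maximal_fin T tau cs"
  then have ne: "cs \<noteq> []" and hd: "hd cs = c"
    and mv: "\<And>i. Suc i < length cs \<Longrightarrow> move T tau (cs ! i) (cs ! Suc i)"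
    and cons: "\<And>i. Suc i < length cs \<Longrightarrow> is_spoiler (cs ! i) \<Longrightarrow> cs ! Suc i = sig T tau (cs ! i)"
    by (auto simp: fin_play_cons_def)
  have "i < length cs \<Longrightarrow> good T tau (cs ! i)" for i
  proof (induction i)
    case 0 then show ?case using hd ne g0 by (simp add: hd_conv_nth)
  next
    case (Suc i)
    then show ?case using good_step[OF _ mv[of i] ] cons[of i] by auto
  qed
  then have "good T tau (last cs)" using ne by (simp add: last_conv_nth)
  moreover have "\<not> (\<exists>c'. move T tau (last cs) c')" using a by (simp add: maximal_fin_def)
  ultimately show "\<not> is_spoiler (last cs)" by (rule good_stuck)
next
  have g0: "good T tau c" using cG by (auto simp: good_def)
  show "\<not> (\<exists>f. inf_play_cons T tau (sig T tau) c f)"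
  proof
    assume "\<exists>f. inf_play_cons T tau (sig T tau) c f"
    then obtain f where f0: "f 0 = c" and mv: "\<And>i. move T tau (f i) (f (Suc i))"
      and cons: "\<And>i. is_spoiler (f i) \<Longrightarrow> f (Suc i) = sig T tau (f i)"
      by (auto simp: inf_play_cons_def)
    have "good T tau (f i) \<and> mu T tau (f i) + i \<le> mu T tau (f 0)" for i
    proof (induction i)
      case 0 then show ?case using f0 g0 by simp
    next
      case (Suc i)
      then show ?case using good_step[of T tau "f i" "f (Suc i)"] mv[of i] cons[of i] by auto
    qed
    from this[of "Suc (mu T tau (f 0))"] show False by simp
  qed
qed

theorem proposition2:
  fixes T :: "'x::finite \<Rightarrow> 'a \<Rightarrow> 'x \<Rightarrow> bool" and tau :: 'a
  shows "game_op T tau (W_S T tau) \<subseteq> W_S T tau \<and>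
         (\<forall>W. game_op T tau W \<subseteq> W \<longrightarrow> W_S T tau \<subseteq> W)"
proof -
  obtain N where N: "GG T tau (Suc N) = GG T tau N" using GG_stab[of T tau] by (elim exE)
  have "game_op T tau (GG T tau N) = GG T tau (Suc N)" unfolding GG_def by simp
  then have fp: "game_op T tau (GG T tau N) = GG T tau N" using N by simp
  have sub: "GG T tau N \<subseteq> W_S T tau"
  proof
    fix c assume c: "c \<in> GG T tau N"
    obtain x y where cxy: "c = SP x y" using GG_SP[OF c] by blast
    have "winning_strategy T tau (sig T tau) (SP x y)" using GG_win[OF c] cxy by simp
    then show "c \<in> W_S T tau" unfolding W_S_def cxy by blast
  qed
  have "W_S T tau \<subseteq> GG T tau N" by (rule WS_least) (simp add: fp)
  then have "W_S T tau = GG T tau N" using sub by blast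
  then have "game_op T tau (W_S T tau) \<subseteq> W_S T tau" using fp by simp
  moreover have "\<forall>W. game_op T tau W \<subseteq> W \<longrightarrow> W_S T tau \<subseteq> W" by (intro allI impI) (rule WS_least)
  ultimately show ?thesis by (rule conjI)
qed

end
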